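(* (1) For all $1\le i,j\le d$, $v^{ij}(-1,-1)\mathbf 1=2L_r^{ij}(-2)\mathbf 1$ in $M_r$. (2) For $1\le i,j\le d$ with $i\ne j$ and $m,n\in\mathbb Z_{<0}$, $v^{ij}(m-1,n)\mathbf 1=-\frac1m L_r^{ii}(-1)v^{ij}(m,n)\mathbf 1$. (3) For $1\le i,j\le d$ with $i\ne j$ and $m,n\in\mathbb Z_{<0}$, $v^{ii}(m-1,n)\mathbf 1=\frac{2}{m(m+n-1)}L_r^{ii}(0)L_r^{ij}(-1)v^{ij}(n,m)\mathbf 1$.
   Context: Fix an integer $d\ge 2$ and $r\in\mathbb{C}$. Let $\hat{\mathfrak h}$ be the complex Lie algebra with basis $\{v^i(m)\mid 1\le i\le d,\ m\in\mathbb{Z}\}\cup\{\mathbf c\}$ and bracket $[v^i(m),v^j(n)]=\delta_{m+n,0}\delta_{i,j}\,m\,\mathbf c$, $[\mathbf c,\hat{\mathfrak h}]=0$. In $A=U(\hat{\mathfrak h})/\langle \mathbf c-1\rangle$ let $v^{ij}(m,n)$ be the image of $v^i(m)v^j(n)$; then $v^{ij}(m,n)=v^{ji}(n,m)$ unless $i=j$ and $m=-n$, and $v^{ii}(m,-m)=v^{ii}(-m,m)+m$. Let $\mathcal B=\{v^{ii}(m,n)\mid 1\le i\le d,\ m\le n\}\cup\{v^{ij}(m,n)\mid 1\le i<j\le d,\ m,n\in\mathbb Z\}$; then $\mathcal B\cup\{1\}$ is linearly independent, $\mathcal L:=\mathrm{span}_{\mathbb C}\mathcal B\oplus\mathbb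 C\subset A$ contains every $v^{ij}(m,n)$ and is closed under $[x,y]=xy-yx$. With $\pi_1,\pi_2$ the projections of $\mathcal L$ onto $\mathrm{span}\,\mathcal B$ and onto $\mathbb C$, $[x,y]_r=\pi_1([x,y])+r\pi_2([x,y])$ is a Lie bracket on $\mathcal L$; call this Lie algebra $\mathcal L_r$. Let $\mathcal B_+=\{v^{ij}(m,n)\in\mathcal B\mid m\ge 0\text{ or }n\ge 0\}$, $\mathcal L_r^+=\mathrm{span}\,\mathcal B_+\oplus\mathbb C$, and $M_r=U(\mathcal L_r)\otimes_{U(\mathcal L_r^+)}\mathbb C\mathbf 1$, where $\mathcal B_+$ acts by $0$ on $\mathbf 1$ and $s\in\mathbb C\subset\mathcal L_r$ acts by the scalar $s$. Define operators on $M_r$: $L_r^{ij}(m)=\frac12\sum_{h\in\mathbb Z}v^{ij}(m-h,h)$ if $i\ne j$ or $m\ne0$, and $L_r^{ii}(0)=\frac12 v^{ii}(0,0)+\sum_{h>0}v^{ii}(-h,h)$ (on each vector only finitely many terms are nonzero). *)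

theory Defs
  imports Complex_Main
begin

text \<open>
  A representation of the Lie algebra L_r on a complex vector space V (with scalar
  multiplication scale) is encoded by operators rho i j m n, the image of the
  generator v^{ij}(m,n) of L_r, for all 1 <= i,j <= d and all integers m,n.
  The constant s in C (a subset of L_r) is required to act as the scalar s.
\<close>

text \<open>Constant part of v^{ab}(x,y) when written in the basis B together with 1:
  v^{aa}(x,-x) = v^{aa}(-x,x) + x for x > 0; all other generators have zero constant part.\<close>
definition gconst :: "nat \<Rightarrow> nat \<Rightarrow> int \<Rightarrow> int \<Rightarrow> complex" where
  "gconst a b x y = (if a = b \<and> x + y = 0 \<and> x > 0 then of_int x else 0)"

text \<open>Image under rho of pi1(z) + r pi2(z) for z = v^{ab}(x,y); since rho(c) = c,
  this is rho(z) + (r - 1) pi2(z).\<close>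
definition rimg ::
  "complex \<Rightarrow> (complex \<Rightarrow> 'v \<Rightarrow> 'v) \<Rightarrow> (nat \<Rightarrow> nat \<Rightarrow> int \<Rightarrow> int \<Rightarrow> 'v \<Rightarrow> 'v::ab_group_add)
    \<Rightarrow> nat \<Rightarrow> nat \<Rightarrow> int \<Rightarrow> int \<Rightarrow> 'v \<Rightarrow> 'v" where
  "rimg r scale rho a b x y u = rho a b x y u + scale ((r - 1) * gconst a b x y) u"

definition is_Lr_rep ::
  "complex \<Rightarrow> nat \<Rightarrow> (complex \<Rightarrow> 'v \<Rightarrow> 'v) \<Rightarrow> (nat \<Rightarrow> nat \<Rightarrow> int \<Rightarrow> int \<Rightarrow> 'v \<Rightarrow> 'v::ab_group_add)
     \<Rightarrow> bool" where
  "is_Lr_rep r d scale rho \<longleftrightarrow>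
     vector_space scale \<and>
     (\<forall>i\<in>{1..d}. \<forall>j\<in>{1..d}. \<forall>m n. Vector_Spaces.linear scale scale (rho i j m n)) \<and>
     (\<forall>i\<in>{1..d}. \<forall>j\<in>{1..d}. \<forall>m n. \<not> (i = j \<and> m + n = 0) \<longrightarrow> rho i j m n = rho j i n m) \<and>
     (\<forall>i\<in>{1..d}. \<forall>m u. rho i i m (- m) u = rho i i (- m) m u + scale (of_int m) u) \<and>
     (\<forall>i\<in>{1..d}. \<forall>j\<in>{1..d}. \<forall>k\<in>{1..d}. \<forall>l\<in>{1..d}. \<forall>m n p q u.
        rho i j m n (rho k l p q u) - rho k l p q (rho i j m n u) =
          (if j = k \<and> n + p = 0 then scale (of_int n) (rimg r scale rho i l m q u) else 0)
        + (if j = l \<and> n + q = 0 then scale (of_int n) (rimg r scale rho i k m p u) else 0)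
        + (if i = k \<and> m + p = 0 then scale (of_int m) (rimg r scale rho l j q n u) else 0)
        + (if i = l \<and> m + q = 0 then scale (of_int m) (rimg r scale rho k j p n u) else 0))"

text \<open>w behaves like the generating vector 1 of M_r: every element of B_+ kills it.\<close>
definition hw_vector ::
  "nat \<Rightarrow> (nat \<Rightarrow> nat \<Rightarrow> int \<Rightarrow> int \<Rightarrow> 'v \<Rightarrow> 'v::zero) \<Rightarrow> 'v \<Rightarrow> bool" where
  "hw_vector d rho w \<longleftrightarrow>
     (\<forall>i\<in>{1..d}. \<forall>j\<in>{1..d}. \<forall>m n.
        (i < j \<or> (i = j \<and> m \<le> n)) \<and> (0 \<le> m \<or> 0 \<le> n) \<longrightarrow> rho i j m n w = 0)"

definition fsum :: "(int \<Rightarrow> 'v::ab_group_add) \<Rightarrow> 'v" where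
  "fsum f = sum f {h. f h \<noteq> 0}"

definition Lop ::
  "(complex \<Rightarrow> 'v \<Rightarrow> 'v) \<Rightarrow> (nat \<Rightarrow> nat \<Rightarrow> int \<Rightarrow> int \<Rightarrow> 'v \<Rightarrow> 'v::ab_group_add)
     \<Rightarrow> nat \<Rightarrow> nat \<Rightarrow> int \<Rightarrow> 'v \<Rightarrow> 'v" where
  "Lop scale rho i j m u =
     (if i \<noteq> j \<or> m \<noteq> 0 then scale (1/2) (fsum (\<lambda>h. rho i j (m - h) h u))
      else scale (1/2) (rho i i 0 0 u) + fsum (\<lambda>h. if 0 < h then rho i i (- h) h u else 0))"

end

theory Submission
  imports Defs
begin

lemma fsum_two:
  assumes "\<And>h. f h = (if h = c1 then x else 0) + (if h = c2 then y else 0)"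
  shows "fsum f = x + y"
proof -
  have sub: "{h. f h \<noteq> 0} \<subseteq> {c1, c2}" using assms by auto
  have "fsum f = sum f {c1, c2}"
    unfolding fsum_def by (rule sum.mono_neutral_left) (use sub in auto)
  also have "\<dots> = (\<Sum>h\<in>{c1,c2}. (if h = c1 then x else 0)) + (\<Sum>h\<in>{c1,c2}. (if h = c2 then y else 0))"
    by (subst sum.distrib[symmetric], rule sum.cong) (simp_all add: assms)
  also have "\<dots> = x + y" by (simp add: sum.delta')
  finally show ?thesis .
qed

theorem lemma3p2:
  fixes r :: complex and d :: nat
    and scale :: "complex \<Rightarrow> 'v::ab_group_add \<Rightarrow> 'v"
    and rho :: "nat \<Rightarrow> nat \<Rightarrow> int \<Rightarrow> int \<Rightarrow> 'v \<Rightarrow> 'v"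
    and w :: 'v
  assumes "2 \<le> d"
    and "is_Lr_rep r d scale rho"
    and "hw_vector d rho w"
  shows "(\<forall>i\<in>{1..d}. \<forall>j\<in>{1..d}.
            rho i j (-1) (-1) w = scale 2 (Lop scale rho i j (-2) w))
       \<and> (\<forall>i\<in>{1..d}. \<forall>j\<in>{1..d}. \<forall>m n. i \<noteq> j \<and> m < 0 \<and> n < 0 \<longrightarrow>
            rho i j (m - 1) n w
              = scale (- 1 / of_int m) (Lop scale rho i i (-1) (rho i j m n w)))
       \<and> (\<forall>i\<in>{1..d}. \<forall>j\<in>{1..d}. \<forall>m n. i \<noteq> j \<and> m < 0 \<and> n < 0 \<longrightarrow>
            rho i i (m - 1) n w
              = scale (2 / (of_int m * of_int (m + n - 1)))
                  (Lop scale rho i i 0 (Lop scale rho i j (-1) (rho i j n m w))))"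
proof -
  from assms(2) have VS: "vector_space scale"
    and LIN: "\<forall>i\<in>{1..d}. \<forall>j\<in>{1..d}. \<forall>m n. Vector_Spaces.linear scale scale (rho i j m n)"
    and SYM: "\<forall>i\<in>{1..d}. \<forall>j\<in>{1..d}. \<forall>m n. \<not> (i = j \<and> m + n = 0) \<longrightarrow> rho i j m n = rho j i n m"
    and COMM: "\<forall>i\<in>{1..d}. \<forall>j\<in>{1..d}. \<forall>k\<in>{1..d}. \<forall>l\<in>{1..d}. \<forall>m n p q u.
        rho i j m n (rho k l p q u) - rho k l p q (rho i j m n u) =
          (if j = k \<and> n + p = 0 then scale (of_int n) (rimg r scale rho i l m q u) else 0)
        + (if j = l \<and> n + q = 0 then scale (of_int n) (rimg r scale rho i k m p u) else 0)
        + (if i = k \<and> m + p = 0 then scale (of_int m) (rimg r scale rho l j q n u) else 0)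
        + (if i = l \<and> m + q = 0 then scale (of_int m) (rimg r scale rho k j p n u) else 0)"
    unfolding is_Lr_rep_def by blast+
  from VS have sadd: "\<And>a x y. scale a (x + y) = scale a x + scale a y"
    and sladd: "\<And>a b x. scale (a + b) x = scale a x + scale b x"
    and ss: "\<And>a b x. scale a (scale b x) = scale (a * b) x"
    and s1: "\<And>x. scale 1 x = x"
    unfolding vector_space_def by auto
  have s0: "\<And>x. scale 0 x = 0" using sladd[of 0 0] by (metis add_cancel_left_left add_0)
  have sz: "\<And>a. scale a 0 = 0" using sadd[of _ 0 0] by simp
  have ladd: "\<And>x y. rho i j a b (x + y) = rho i j a b x + rho i j a b y"
    if "i \<in> {1..d}" "j \<in> {1..d}" for i j a b
  proof -
    have LL: "Vector_Spaces.linear scale scale (rho i j a b)" using LIN that by blast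
    show "\<And>x y. rho i j a b (x + y) = rho i j a b x + rho i j a b y" by (rule module_hom.add[OF LL[unfolded linear_iff_module_hom]])
  qed
  have lsc: "\<And>c x. rho i j a b (scale c x) = scale c (rho i j a b x)"
    if "i \<in> {1..d}" "j \<in> {1..d}" for i j a b
  proof -
    have LL: "Vector_Spaces.linear scale scale (rho i j a b)" using LIN that by blast
    show "\<And>c x. rho i j a b (scale c x) = scale c (rho i j a b x)" by (rule module_hom.scale[OF LL[unfolded linear_iff_module_hom]])
  qed
  have l0: "rho i j a b 0 = 0" if "i \<in> {1..d}" "j \<in> {1..d}" for i j a b
    using lsc[OF that, of a b 0 0] s0 by metis
  have HW: "\<And>i j m n. i\<in>{1..d} \<Longrightarrow> j\<in>{1..d} \<Longrightarrow>
        (i < j \<or> (i = j \<and> m \<le> n)) \<Longrightarrow> (0 \<le> m \<or> 0 \<le> n) \<Longrightarrow> rho i j m n w = 0"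
    using assms(3) unfolding hw_vector_def by blast
  have kill: "rho i j a b w = 0"
    if "i \<in> {1..d}" "j \<in> {1..d}" "0 \<le> a \<or> 0 \<le> b" "\<not> (i = j \<and> a + b = 0)" for i j a b
  proof -
    consider "i < j" | "j < i" | "i = j \<and> a \<le> b" | "i = j \<and> b < a" by linarith
    then show ?thesis
    proof cases
      case 1 then show ?thesis using HW that by blast
    next
      case 2
      have "rho i j a b = rho j i b a" using SYM that 2 by auto
      then show ?thesis using HW[of j i b a] that 2 by auto
    next
      case 3 then show ?thesis using HW that by blast
    next
      case 4
      have "rho i j a b = rho j i b a" using SYM that 4 by auto
      then show ?thesis using HW[of j i b a] that 4 by auto
    qed
  qed
  have rimg_nc: "rimg r scale rho a b x y u = rho a b x y u" if "\<not> (a = b \<and> x + y = 0 \<and> x > 0)" for a b x y u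
    using that unfolding rimg_def gconst_def by (auto simp add: s0)

  have P1: "\<forall>i\<in>{1..d}. \<forall>j\<in>{1..d}.
            rho i j (-1) (-1) w = scale 2 (Lop scale rho i j (-2) w)"
  proof (intro ballI)
    fix i j assume i: "i \<in> {1..d}" and j: "j \<in> {1..d}"
    have f: "rho i j (-2 - h) h w = (if h = -1 then rho i j (-1) (-1) w else 0) + (if h = -1 then 0 else 0)" for h
    proof (cases "h = -1")
      case True then show ?thesis by simp
    next
      case False
      have "rho i j (-2 - h) h w = 0" by (rule kill[OF i j]) (use False in auto)
      then show ?thesis using False by simp
    qed
    have "fsum (\<lambda>h. rho i j (-2 - h) h w) = rho i j (-1) (-1) w + 0"
      by (rule fsum_two) (rule f)
    then have "Lop scale rho i j (-2) w = scale (1/2) (rho i j (-1) (-1) w)"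
      unfolding Lop_def by simp
    then show "rho i j (-1) (-1) w = scale 2 (Lop scale rho i j (-2) w)"
      by (simp add: ss s1)
  qed
  have P2: "\<forall>i\<in>{1..d}. \<forall>j\<in>{1..d}. \<forall>m n. i \<noteq> j \<and> m < 0 \<and> n < 0 \<longrightarrow>
            rho i j (m - 1) n w
              = scale (- 1 / of_int m) (Lop scale rho i i (-1) (rho i j m n w))"
  proof (intro ballI allI impI)
    fix i j and m n :: int assume i: "i \<in> {1..d}" and j: "j \<in> {1..d}" and h: "i \<noteq> j \<and> m < 0 \<and> n < 0"
    define Y where "Y = rho i j (m - 1) n w"
    have sy: "rho j i n (m - 1) = rho i j (m - 1) n" using SYM i j h by auto
    have f: "rho i i (-1 - k) k (rho i j m n w) = (if k = -m then scale (of_int (-m)) Y else 0) + (if k = m - 1 then scale (of_int (-m)) Y else 0)" for k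
    proof -
      have kk: "rho i i (-1 - k) k w = 0" by (rule kill[OF i i]) auto
      have c: "rho i i (-1 - k) k (rho i j m n w) - rho i j m n (rho i i (-1 - k) k w) =
          (if i = i \<and> k + m = 0 then scale (of_int k) (rimg r scale rho i j (-1 - k) n w) else 0)
        + (if i = j \<and> k + n = 0 then scale (of_int k) (rimg r scale rho i i (-1 - k) m w) else 0)
        + (if i = i \<and> (-1 - k) + m = 0 then scale (of_int (-1 - k)) (rimg r scale rho j i n k w) else 0)
        + (if i = j \<and> (-1 - k) + n = 0 then scale (of_int (-1 - k)) (rimg r scale rho i i m k w) else 0)"
        using COMM i j by blast
      have r1: "rimg r scale rho i j (-1 - k) n w = rho i j (-1 - k) n w" by (rule rimg_nc) (use h in auto)
      have r2: "rimg r scale rho j i n k w = rho j i n k w" by (rule rimg_nc) (use h in auto)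
      have c2: "rho i i (-1 - k) k (rho i j m n w) =
          (if k + m = 0 then scale (of_int k) (rho i j (-1 - k) n w) else 0)
        + (if (-1 - k) + m = 0 then scale (of_int (-1 - k)) (rho j i n k w) else 0)"
        using c h by (simp add: kk l0[OF i j] r1 r2)
      show ?thesis
      proof (cases "k = -m")
        case True
        then show ?thesis using c2 h by (simp add: Y_def)
      next
        case False
        show ?thesis
        proof (cases "k = m - 1")
          case True
          then show ?thesis using c2 h False by (simp add: Y_def sy)
        next
          case False2: False
          then show ?thesis using c2 h False by simp
        qed
      qed
    qed
    have "fsum (\<lambda>k. rho i i (-1 - k) k (rho i j m n w)) = scale (of_int (-m)) Y + scale (of_int (-m)) Y"
      by (rule fsum_two) (rule f)
    also have "\<dots> = scale (2 * of_int (-m)) Y" by (metis sladd mult_2)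
    finally have L: "Lop scale rho i i (-1) (rho i j m n w) = scale (of_int (-m)) Y"
      unfolding Lop_def by (simp add: ss)
    have "of_int m \<noteq> (0::complex)" using h by simp
    then show "rho i j (m - 1) n w = scale (- 1 / of_int m) (Lop scale rho i i (-1) (rho i j m n w))"
      unfolding L by (simp add: ss s1 Y_def)
  qed

  have P3: "\<forall>i\<in>{1..d}. \<forall>j\<in>{1..d}. \<forall>m n. i \<noteq> j \<and> m < 0 \<and> n < 0 \<longrightarrow>
            rho i i (m - 1) n w
              = scale (2 / (of_int m * of_int (m + n - 1)))
                  (Lop scale rho i i 0 (Lop scale rho i j (-1) (rho i j n m w)))"
  proof (intro ballI allI impI)
    fix i j and m n :: int assume i: "i \<in> {1..d}" and j: "j \<in> {1..d}" and h: "i \<noteq> j \<and> m < 0 \<and> n < 0"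
    define A where "A = rho i i (m - 1) n w"
    define B where "B = rho j j m (n - 1) w"
    define V where "V = scale (1/2) (scale (of_int (-m)) A + scale (of_int (-n)) B)"
    have f1: "rho i j (-1 - k) k (rho i j n m w) = (if k = -m then scale (of_int (-m)) A else 0) + (if k = n - 1 then scale (of_int (-n)) B else 0)" for k
    proof -
      have kk: "rho i j (-1 - k) k w = 0" by (rule kill[OF i j]) auto
      have c: "rho i j (-1 - k) k (rho i j n m w) - rho i j n m (rho i j (-1 - k) k w) =
          (if j = i \<and> k + n = 0 then scale (of_int k) (rimg r scale rho i j (-1 - k) m w) else 0)
        + (if j = j \<and> k + m = 0 then scale (of_int k) (rimg r scale rho i i (-1 - k) n w) else 0)
        + (if i = i \<and> (-1 - k) + n = 0 then scale (of_int (-1 - k)) (rimg r scale rho j j m k w) else 0)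
        + (if i = j \<and> (-1 - k) + m = 0 then scale (of_int (-1 - k)) (rimg r scale rho i j n k w) else 0)"
        using COMM i j by blast
      have c2: "rho i j (-1 - k) k (rho i j n m w) =
          (if k + m = 0 then scale (of_int k) (rimg r scale rho i i (-1 - k) n w) else 0)
        + (if (-1 - k) + n = 0 then scale (of_int (-1 - k)) (rimg r scale rho j j m k w) else 0)"
        using c h by (simp add: kk l0[OF i j])
      show ?thesis
      proof (cases "k = -m")
        case True
        have "rimg r scale rho i i (-1 - k) n w = A" unfolding A_def
          using True h by (subst rimg_nc) auto
        then show ?thesis using c2 h True by simp
      next
        case False
        show ?thesis
        proof (cases "k = n - 1")
          case True
          have "rimg r scale rho j j m k w = B" unfolding B_def
            using True h by (subst rimg_nc) auto
          then show ?thesis using c2 h False True by simp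
        next
          case False2: False
          then show ?thesis using c2 h False by simp
        qed
      qed
    qed
    have "fsum (\<lambda>k. rho i j (-1 - k) k (rho i j n m w)) = scale (of_int (-m)) A + scale (of_int (-n)) B"
      by (rule fsum_two) (rule f1)
    then have LV: "Lop scale rho i j (-1) (rho i j n m w) = V"
      unfolding Lop_def V_def using h by simp
    have wk: "rho i i (-k) k w = 0" if "0 \<le> k" for k
      by (rule HW[OF i i]) (use that in auto)
    have fA: "rho i i (-k) k A = (if k = 1 - m then scale (of_int (1 - m)) A else 0) + (if k = -n then scale (of_int (-n)) A else 0)"
      if k0: "0 < k" for k
    proof -
      have c: "rho i i (-k) k (rho i i (m - 1) n w) - rho i i (m - 1) n (rho i i (-k) k w) =
          (if i = i \<and> k + (m - 1) = 0 then scale (of_int k) (rimg r scale rho i i (-k) n w) else 0)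
        + (if i = i \<and> k + n = 0 then scale (of_int k) (rimg r scale rho i i (-k) (m - 1) w) else 0)
        + (if i = i \<and> -k + (m - 1) = 0 then scale (of_int (-k)) (rimg r scale rho i i n k w) else 0)
        + (if i = i \<and> -k + n = 0 then scale (of_int (-k)) (rimg r scale rho i i (m - 1) k w) else 0)"
        using COMM i by blast
      have c2: "rho i i (-k) k A =
          (if k + (m - 1) = 0 then scale (of_int k) (rimg r scale rho i i (-k) n w) else 0)
        + (if k + n = 0 then scale (of_int k) (rimg r scale rho i i (-k) (m - 1) w) else 0)"
        using c h k0 by (simp add: wk l0[OF i i] A_def)
      have e1: "k = 1 - m \<Longrightarrow> rimg r scale rho i i (-k) n w = A" unfolding A_def
        using h by (subst rimg_nc) auto
      have sy: "rho i i n (m - 1) = rho i i (m - 1) n" using SYM i h by auto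
      have e2: "k = -n \<Longrightarrow> rimg r scale rho i i (-k) (m - 1) w = A" unfolding A_def
        using h by (subst rimg_nc) (auto simp: sy)
      show ?thesis
      proof (cases "k = 1 - m")
        case T1: True
        show ?thesis
        proof (cases "k = -n")
          case True
          show ?thesis unfolding c2 using T1 True e1[OF T1] e2[OF True] by simp
        next
          case False
          show ?thesis unfolding c2 using T1 False e1[OF T1] by simp
        qed
      next
        case F1: False
        show ?thesis
        proof (cases "k = -n")
          case True
          show ?thesis unfolding c2 using F1 True e2[OF True] by simp
        next
          case False
          show ?thesis unfolding c2 using F1 False by simp
        qed
      qed
    qed
    have fA0: "rho i i 0 0 A = 0"
    proof -
      have c: "rho i i 0 0 (rho i i (m - 1) n w) - rho i i (m - 1) n (rho i i 0 0 w) =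
          (if i = i \<and> 0 + (m - 1) = 0 then scale (of_int 0) (rimg r scale rho i i 0 n w) else 0)
        + (if i = i \<and> 0 + n = 0 then scale (of_int 0) (rimg r scale rho i i 0 (m - 1) w) else 0)
        + (if i = i \<and> 0 + (m - 1) = 0 then scale (of_int 0) (rimg r scale rho i i n 0 w) else 0)
        + (if i = i \<and> 0 + n = 0 then scale (of_int 0) (rimg r scale rho i i (m - 1) 0 w) else 0)"
        using COMM i by blast
      have "rho i i 0 0 w = 0" using wk[of 0] by simp
      then show ?thesis using c h by (simp add: l0[OF i i] A_def)
    qed
    have fB: "rho i i a b B = rho j j m (n - 1) (rho i i a b w)" for a b
    proof -
      have c: "rho i i a b (rho j j m (n - 1) w) - rho j j m (n - 1) (rho i i a b w) =
          (if i = j \<and> b + m = 0 then scale (of_int b) (rimg r scale rho i j a (n - 1) w) else 0)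
        + (if i = j \<and> b + (n - 1) = 0 then scale (of_int b) (rimg r scale rho i j a m w) else 0)
        + (if i = j \<and> a + m = 0 then scale (of_int a) (rimg r scale rho j i (n - 1) b w) else 0)
        + (if i = j \<and> a + (n - 1) = 0 then scale (of_int a) (rimg r scale rho j i m b w) else 0)"
        using COMM i j by blast
      then show ?thesis using h by (simp add: B_def)
    qed
    have fB0: "rho i i 0 0 B = 0" using fB[of 0 0] wk[of 0] l0[OF j j] by simp
    have fBk: "rho i i (-k) k B = 0" if "0 < k" for k using fB[of "-k" k] wk[of k] l0[OF j j] that by simp
    have rV: "rho i i a b V = scale (1/2) (scale (of_int (-m)) (rho i i a b A) + scale (of_int (-n)) (rho i i a b B))" for a b
      unfolding V_def by (simp add: ladd[OF i i] lsc[OF i i])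
    define c1 :: complex where "c1 = 1/2 * of_int (-m) * of_int (1 - m)"
    define c2 :: complex where "c2 = 1/2 * of_int (-m) * of_int (-n)"
    have g: "(if 0 < k then rho i i (-k) k V else 0) = (if k = 1 - m then scale c1 A else 0) + (if k = -n then scale c2 A else 0)" for k
    proof (cases "0 < k")
      case True
      show ?thesis using True unfolding rV fA[OF True] fBk[OF True] c1_def c2_def
        by (simp add: sz sadd ss mult.assoc)
    next
      case False then show ?thesis using h by auto
    qed
    have "fsum (\<lambda>k. if 0 < k then rho i i (-k) k V else 0) = scale c1 A + scale c2 A"
      by (rule fsum_two) (rule g)
    moreover have "rho i i 0 0 V = 0" unfolding rV fA0 fB0 by (simp add: sz)
    ultimately have LL: "Lop scale rho i i 0 V = scale (c1 + c2) A"
      unfolding Lop_def by (simp add: sz sladd)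
    have nz1: "(of_int m :: complex) \<noteq> 0" using h by simp
    have nz2: "(of_int (m + n - 1) :: complex) \<noteq> 0" using h by (simp only: of_int_eq_0_iff) linarith
    have "2 / (of_int m * of_int (m + n - 1)) * (c1 + c2) = 1"
    proof -
      have "c1 + c2 = of_int m * of_int (m + n - 1) / 2"
        unfolding c1_def c2_def by (simp add: field_simps)
      then show ?thesis using nz1 nz2 by (simp add: mult.commute)
    qed
    then show "rho i i (m - 1) n w = scale (2 / (of_int m * of_int (m + n - 1)))
                  (Lop scale rho i i 0 (Lop scale rho i j (-1) (rho i j n m w)))"
      unfolding LV LL by (simp add: ss s1 A_def)
  qed
  show ?thesis using P1 P2 P3 by blast
qed

end
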